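(* Let $\Bbbk$ be an algebraically closed field of characteristic zero, $G$ a finite group, $\chi:G\to\Bbbk^\times$ a linear character, $g\in Z(G)$, $n\geq2$ the multiplicative order of $\chi(g)$, and $H$ the $\Bbbk$-algebra generated by $\Bbbk G$ and $z$ with relations $z^n=0$, $zs=\chi(s)sz$ ($s\in G$). Suppose $$\Big(\sum_{j=1}^t z^{l_j}\sum_{i=0}^{p-1}\alpha_i^{(j)}e_i\Big)=\Big(\sum_{s=1}^r z^{m_s}\sum_{i=0}^{p-1}\beta_i^{(s)}e_i\Big),$$ where $n-1\geq l_1>\cdots>l_t\geq0$, $n-1\geq m_1>\cdots>m_r\geq0$, all $\alpha_i^{(j)},\beta_i^{(s)}\in\{0,1\}$, $\sum_i\alpha_i^{(t)}\neq0$ and $\sum_i\beta_i^{(r)}\neq0$. Then $l_t=m_r$ and $\alpha_i^{(t)}=\beta_i^{(r)}$ for $0\leq i\leq p-1$.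
   Context: $\chi_0,\dots,\chi_{p-1}$ are the irreducible characters of $G$ and $e_i=\frac{\chi_i(1)}{|G|}\sum_{h\in G}\chi_i(h)h^{-1}$ the primitive central idempotents of $\Bbbk G$. $(a)$ denotes the two-sided ideal of $H$ generated by $a$. *)

theory Defs
  imports "HOL-Algebra.Group" "HOL-Computational_Algebra.Polynomial"
begin

definition alg_closed :: "'k::field itself \<Rightarrow> bool" where
  "alg_closed _ \<longleftrightarrow> (\<forall>q::'k poly. degree q > 0 \<longrightarrow> (\<exists>x. poly q x = 0))"

definition linear_char :: "('g, 'b) monoid_scheme \<Rightarrow> ('g \<Rightarrow> 'k::field) \<Rightarrow> bool" where
  "linear_char G chi \<longleftrightarrow> (\<forall>s\<in>carrier G. chi s \<noteq> 0) \<and>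
     (\<forall>s\<in>carrier G. \<forall>t\<in>carrier G. chi (s \<otimes>\<^bsub>G\<^esub> t) = chi s * chi t)"

definition mult_order_is :: "'k::field \<Rightarrow> nat \<Rightarrow> bool" where
  "mult_order_is x n \<longleftrightarrow> 0 < n \<and> x ^ n = 1 \<and> (\<forall>m. 0 < m \<and> m < n \<longrightarrow> x ^ m \<noteq> 1)"

definition gcarrier :: "('g, 'b) monoid_scheme \<Rightarrow> ('g \<Rightarrow> 'k::field) set" where
  "gcarrier G = {x. \<forall>s. s \<notin> carrier G \<longrightarrow> x s = 0}"

definition gmul :: "('g, 'b) monoid_scheme \<Rightarrow> ('g \<Rightarrow> 'k::field) \<Rightarrow> ('g \<Rightarrow> 'k) \<Rightarrow> ('g \<Rightarrow> 'k)" where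
  "gmul G x y = (\<lambda>u. if u \<in> carrier G
      then (\<Sum>s\<in>carrier G. x s * y (inv\<^bsub>G\<^esub> s \<otimes>\<^bsub>G\<^esub> u)) else 0)"

definition gadd :: "('g \<Rightarrow> 'k::field) \<Rightarrow> ('g \<Rightarrow> 'k) \<Rightarrow> ('g \<Rightarrow> 'k)" where
  "gadd x y = (\<lambda>u. x u + y u)"

definition central_idem :: "('g, 'b) monoid_scheme \<Rightarrow> ('g \<Rightarrow> 'k::field) \<Rightarrow> bool" where
  "central_idem G e \<longleftrightarrow> e \<in> gcarrier G \<and> gmul G e e = e \<and>
     (\<forall>x\<in>gcarrier G. gmul G e x = gmul G x e)"

definition prim_central_idem :: "('g, 'b) monoid_scheme \<Rightarrow> ('g \<Rightarrow> 'k::field) \<Rightarrow> bool" where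
  "prim_central_idem G e \<longleftrightarrow> central_idem G e \<and> e \<noteq> (\<lambda>_. 0) \<and>
     \<not> (\<exists>f f'. central_idem G f \<and> central_idem G f' \<and> f \<noteq> (\<lambda>_. 0) \<and> f' \<noteq> (\<lambda>_. 0) \<and>
          gmul G f f' = (\<lambda>_. 0) \<and> e = gadd f f')"

(* ---------- the algebra H = k<kG, z | z^n = 0, z s = chi(s) s z>, realised on its
   normal-form basis { z^k s : 0 <= k < n, s in G };  a k s = coefficient of z^k s ---------- *)
definition hcarrier :: "('g, 'b) monoid_scheme \<Rightarrow> nat \<Rightarrow> (nat \<Rightarrow> 'g \<Rightarrow> 'k::field) set" where
  "hcarrier G n = {a. \<forall>k s. (n \<le> k \<or> s \<notin> carrier G) \<longrightarrow> a k s = 0}"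

definition hadd :: "(nat \<Rightarrow> 'g \<Rightarrow> 'k::field) \<Rightarrow> (nat \<Rightarrow> 'g \<Rightarrow> 'k) \<Rightarrow> (nat \<Rightarrow> 'g \<Rightarrow> 'k)" where
  "hadd a b = (\<lambda>k s. a k s + b k s)"

(* (z^k s)(z^l t) = chi(s)^(-l) z^(k+l) (s t), and z^m = 0 for m >= n *)
definition hmul :: "('g, 'b) monoid_scheme \<Rightarrow> ('g \<Rightarrow> 'k::field) \<Rightarrow> nat \<Rightarrow>
    (nat \<Rightarrow> 'g \<Rightarrow> 'k) \<Rightarrow> (nat \<Rightarrow> 'g \<Rightarrow> 'k) \<Rightarrow> (nat \<Rightarrow> 'g \<Rightarrow> 'k)" where
  "hmul G chi n a b = (\<lambda>c u. if c < n \<and> u \<in> carrier G then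
      (\<Sum>k\<in>{..c}. \<Sum>s\<in>carrier G.
          a k s * b (c - k) (inv\<^bsub>G\<^esub> s \<otimes>\<^bsub>G\<^esub> u) * inverse (chi s) ^ (c - k))
      else 0)"

definition hG :: "('g, 'b) monoid_scheme \<Rightarrow> ('g \<Rightarrow> 'k::field) \<Rightarrow> (nat \<Rightarrow> 'g \<Rightarrow> 'k)" where
  "hG G x = (\<lambda>k s. if k = 0 \<and> s \<in> carrier G then x s else 0)"

definition hz :: "('g, 'b) monoid_scheme \<Rightarrow> nat \<Rightarrow> nat \<Rightarrow> (nat \<Rightarrow> 'g \<Rightarrow> 'k::field)" where
  "hz G n l = (\<lambda>k s. if k = l \<and> l < n \<and> s = \<one>\<^bsub>G\<^esub> then 1 else 0)"

definition is_hideal :: "('g, 'b) monoid_scheme \<Rightarrow> ('g \<Rightarrow> 'k::field) \<Rightarrow> nat \<Rightarrow>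
    (nat \<Rightarrow> 'g \<Rightarrow> 'k) set \<Rightarrow> bool" where
  "is_hideal G chi n I \<longleftrightarrow> I \<subseteq> hcarrier G n \<and> (\<lambda>_ _. 0) \<in> I \<and>
     (\<forall>a\<in>I. \<forall>b\<in>I. hadd a b \<in> I) \<and>
     (\<forall>a\<in>I. \<forall>x\<in>hcarrier G n. hmul G chi n x a \<in> I \<and> hmul G chi n a x \<in> I)"

definition hideal_gen :: "('g, 'b) monoid_scheme \<Rightarrow> ('g \<Rightarrow> 'k::field) \<Rightarrow> nat \<Rightarrow>
    (nat \<Rightarrow> 'g \<Rightarrow> 'k) \<Rightarrow> (nat \<Rightarrow> 'g \<Rightarrow> 'k) set" where
  "hideal_gen G chi n a = \<Inter>{I. is_hideal G chi n I \<and> a \<in> I}"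

definition zsum :: "('g, 'b) monoid_scheme \<Rightarrow> ('g \<Rightarrow> 'k::field) \<Rightarrow> nat \<Rightarrow> nat \<Rightarrow>
    (nat \<Rightarrow> 'g \<Rightarrow> 'k) \<Rightarrow> nat \<Rightarrow> (nat \<Rightarrow> nat) \<Rightarrow> (nat \<Rightarrow> nat \<Rightarrow> 'k) \<Rightarrow> (nat \<Rightarrow> 'g \<Rightarrow> 'k)" where
  "zsum G chi n p e t l \<alpha> = (\<lambda>k s. \<Sum>j\<in>{1..t}.
      hmul G chi n (hz G n (l j)) (hG G (\<lambda>u. \<Sum>i<p. \<alpha> j i * e i u)) k s)"

end

theory Submission
  imports Defs
begin


lemma (in group) gmul_assoc: "gmul G (gmul G x y) z = gmul G x (gmul G y z)"
proof (rule ext)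
  fix u show "gmul G (gmul G x y) z u = gmul G x (gmul G y z) u"
  proof (cases "u \<in> carrier G")
    case True
    have "gmul G (gmul G x y) z u = (\<Sum>w\<in>carrier G. (\<Sum>s\<in>carrier G. x s * y (inv s \<otimes> w)) * z (inv w \<otimes> u))"
      using True by (auto simp: gmul_def intro!: sum.cong)
    also have "\<dots> = (\<Sum>s\<in>carrier G. \<Sum>w\<in>carrier G. x s * y (inv s \<otimes> w) * z (inv w \<otimes> u))"
      unfolding sum_distrib_right by (rule sum.swap)
    also have "\<dots> = (\<Sum>s\<in>carrier G. \<Sum>t\<in>carrier G. x s * y t * z (inv t \<otimes> (inv s \<otimes> u)))"
    proof (rule sum.cong[OF refl])
      fix s assume s: "s \<in> carrier G"
      show "(\<Sum>w\<in>carrier G. x s * y (inv s \<otimes> w) * z (inv w \<otimes> u)) = (\<Sum>t\<in>carrier G. x s * y t * z (inv t \<otimes> (inv s \<otimes> u)))"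
      proof (rule sum.reindex_bij_witness[where i="\<lambda>t. s \<otimes> t" and j="\<lambda>w. inv s \<otimes> w"])
        fix w assume w: "w \<in> carrier G"
        have "inv (inv s \<otimes> w) \<otimes> (inv s \<otimes> u) = inv w \<otimes> u"
        proof -
          have "s \<otimes> (inv s \<otimes> u) = u" using s True by (simp add: m_assoc[symmetric])
          then show ?thesis using s w True by (simp add: inv_mult_group m_assoc)
        qed
        then show "x s * y (inv s \<otimes> w) * z (inv (inv s \<otimes> w) \<otimes> (inv s \<otimes> u)) = x s * y (inv s \<otimes> w) * z (inv w \<otimes> u)" 
          by simp
        show "s \<otimes> (inv s \<otimes> w) = w" using s w by (simp add: m_assoc[symmetric])
        show "inv s \<otimes> w \<in> carrier G" using s w by simp
      next
        fix t assume t: "t \<in> carrier G"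
        show "inv s \<otimes> (s \<otimes> t) = t" using s t by (simp add: m_assoc[symmetric])
        show "s \<otimes> t \<in> carrier G" using s t by simp
      qed
    qed
    also have "\<dots> = gmul G x (gmul G y z) u" using True
      by (simp add: gmul_def sum_distrib_left mult.assoc)
    finally show ?thesis .
  next
    case False then show ?thesis by (simp add: gmul_def)
  qed
qed

lemma sum_single_nz:
  assumes "finite A" "a \<in> A" "\<And>k. k \<in> A \<Longrightarrow> k \<noteq> a \<Longrightarrow> f k = 0"
  shows "sum f A = f a"
proof -
  have "sum f A = f a + sum f (A - {a})" using assms by (simp add: sum.remove)
  also have "sum f (A - {a}) = 0" using assms by (intro sum.neutral) auto
  finally show ?thesis by simp
qed

lemma gmul_gcarrier: "gmul G x y \<in> gcarrier G"
  by (simp add: gmul_def gcarrier_def)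

lemma gmul_zero_left: "gmul G (\<lambda>_. 0) y = (\<lambda>_. 0)"
  unfolding gmul_def by (simp only: mult_zero_left sum.neutral_const if_cancel)

lemma gmul_zero_right: "gmul G x (\<lambda>_. 0) = (\<lambda>_. 0)"
  unfolding gmul_def by (simp only: mult_zero_right sum.neutral_const if_cancel)

lemma gmul_add_left: "gmul G (\<lambda>u. x u + y u) z = (\<lambda>u. gmul G x z u + gmul G y z u)"
  by (auto simp: gmul_def algebra_simps sum.distrib)

lemma gmul_diff_left: "gmul G (\<lambda>u. x u - y u) z = (\<lambda>u. gmul G x z u - gmul G y z u)"
  by (auto simp: gmul_def algebra_simps sum_subtractf)

lemma gmul_diff_right: "gmul G x (\<lambda>u. y u - z u) = (\<lambda>u. gmul G x y u - gmul G x z u)"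
  by (auto simp: gmul_def algebra_simps sum_subtractf)

lemma gmul_sum_left:
  assumes "finite I"
  shows "gmul G (\<lambda>u. \<Sum>i\<in>I. c i * f i u) y = (\<lambda>u. \<Sum>i\<in>I. c i * gmul G (f i) y u)"
proof (rule ext)
  fix u
  show "gmul G (\<lambda>u. \<Sum>i\<in>I. c i * f i u) y u = (\<Sum>i\<in>I. c i * gmul G (f i) y u)"
  proof (cases "u \<in> carrier G")
    case True
    have "gmul G (\<lambda>u. \<Sum>i\<in>I. c i * f i u) y u = (\<Sum>s\<in>carrier G. \<Sum>i\<in>I. c i * f i s * y (inv\<^bsub>G\<^esub> s \<otimes>\<^bsub>G\<^esub> u))"
      using True by (simp add: gmul_def sum_distrib_right)
    also have "\<dots> = (\<Sum>i\<in>I. \<Sum>s\<in>carrier G. c i * f i s * y (inv\<^bsub>G\<^esub> s \<otimes>\<^bsub>G\<^esub> u))"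
      by (rule sum.swap)
    also have "\<dots> = (\<Sum>i\<in>I. c i * gmul G (f i) y u)"
      using True by (simp add: gmul_def sum_distrib_left mult.assoc)
    finally show ?thesis .
  qed (simp add: gmul_def)
qed

lemma gmul_sum_right:
  assumes "finite I"
  shows "gmul G x (\<lambda>u. \<Sum>i\<in>I. c i * f i u) = (\<lambda>u. \<Sum>i\<in>I. c i * gmul G x (f i) u)"
proof (rule ext)
  fix u
  show "gmul G x (\<lambda>u. \<Sum>i\<in>I. c i * f i u) u = (\<Sum>i\<in>I. c i * gmul G x (f i) u)"
  proof (cases "u \<in> carrier G")
    case True
    have "gmul G x (\<lambda>u. \<Sum>i\<in>I. c i * f i u) u = (\<Sum>s\<in>carrier G. \<Sum>i\<in>I. c i * (x s * f i (inv\<^bsub>G\<^esub> s \<otimes>\<^bsub>G\<^esub> u)))"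
      using True by (simp add: gmul_def sum_distrib_left algebra_simps)
    also have "\<dots> = (\<Sum>i\<in>I. \<Sum>s\<in>carrier G. c i * (x s * f i (inv\<^bsub>G\<^esub> s \<otimes>\<^bsub>G\<^esub> u)))"
      by (rule sum.swap)
    also have "\<dots> = (\<Sum>i\<in>I. c i * gmul G x (f i) u)"
      using True by (simp add: gmul_def sum_distrib_left)
    finally show ?thesis .
  qed (simp add: gmul_def)
qed

lemma (in group) prim_orth:
  assumes e: "prim_central_idem G e" and f: "prim_central_idem G f" and ne: "e \<noteq> f"
  shows "gmul G e f = (\<lambda>_. 0)"
proof (rule ccontr)
  assume hnz: "gmul G e f \<noteq> (\<lambda>_. 0)"
  define h where "h = gmul G e f"
  have eC: "e \<in> gcarrier G" "gmul G e e = e" "\<And>x. x \<in> gcarrier G \<Longrightarrow> gmul G e x = gmul G x e"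
    using e by (auto simp: prim_central_idem_def central_idem_def)
  have fC: "f \<in> gcarrier G" "gmul G f f = f" "\<And>x. x \<in> gcarrier G \<Longrightarrow> gmul G f x = gmul G x f"
    using f by (auto simp: prim_central_idem_def central_idem_def)
  have ef: "gmul G e f = gmul G f e" using eC(3)[OF fC(1)] .
  have hh: "gmul G h h = h" unfolding h_def
  proof -
    have fef: "gmul G f (gmul G e f) = gmul G e f" by (simp only: ef gmul_assoc[symmetric] fC(2))
    have "gmul G (gmul G e f) (gmul G e f) = gmul G e (gmul G f (gmul G e f))"
      by (simp only: gmul_assoc)
    also have "\<dots> = gmul G e (gmul G e f)" by (simp only: fef)
    also have "\<dots> = gmul G e f" by (simp only: gmul_assoc[symmetric] eC(2))
    finally show "gmul G (gmul G e f) (gmul G e f) = gmul G e f" .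
  qed
  have hc: "gmul G h x = gmul G x h" if x: "x \<in> gcarrier G" for x
  proof -
    have "gmul G h x = gmul G e (gmul G x f)" unfolding h_def using fC(3)[OF x] by (simp add: gmul_assoc)
    also have "\<dots> = gmul G (gmul G e x) f" by (simp add: gmul_assoc)
    also have "\<dots> = gmul G x h" unfolding h_def using eC(3)[OF x] by (simp add: gmul_assoc)
    finally show ?thesis .
  qed
  have hC: "central_idem G h" unfolding central_idem_def
  proof (intro conjI)
    show "h \<in> gcarrier G" unfolding h_def by (rule gmul_gcarrier)
    show "gmul G h h = h" by (rule hh)
    show "\<forall>x\<in>gcarrier G. gmul G h x = gmul G x h" using hc by blast
  qed
  have eh: "gmul G e h = h" unfolding h_def by (simp only: gmul_assoc[symmetric] eC(2))
  have fh: "gmul G f h = h" unfolding h_def by (simp only: ef gmul_assoc[symmetric] fC(2))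
  have split: "(\<lambda>u. a u - h u) = (\<lambda>_. 0)"
    if a: "prim_central_idem G a" and ah: "gmul G a h = h" for a
  proof -
    have aC: "a \<in> gcarrier G" "gmul G a a = a" "\<And>x. x \<in> gcarrier G \<Longrightarrow> gmul G a x = gmul G x a"
      using a by (auto simp: prim_central_idem_def central_idem_def)
    have ha: "gmul G h a = h" using ah hc[OF aC(1)] by simp
    define h' where "h' = (\<lambda>u. a u - h u)"
    have h'c: "h' \<in> gcarrier G" using aC(1) gmul_gcarrier[of G e f]
      by (auto simp: h'_def h_def gcarrier_def)
    have h'h': "gmul G h' h' = h'"
      unfolding h'_def by (simp only: gmul_diff_left gmul_diff_right aC(2) ah ha hh diff_self diff_zero)
    have h'x: "gmul G h' x = gmul G x h'" if "x \<in> gcarrier G" for x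
      unfolding h'_def gmul_diff_left gmul_diff_right using aC(3)[OF that] hc[OF that] by simp
    have h'C: "central_idem G h'" unfolding central_idem_def
    proof (intro conjI)
      show "h' \<in> gcarrier G" by (rule h'c)
      show "gmul G h' h' = h'" by (rule h'h')
      show "\<forall>x\<in>gcarrier G. gmul G h' x = gmul G x h'" using h'x by blast
    qed
    have orth: "gmul G h h' = (\<lambda>_. 0)"
      unfolding h'_def gmul_diff_right using ha hh by simp
    have sum: "a = gadd h h'" by (simp add: gadd_def h'_def)
    from a have "\<not> (central_idem G h \<and> central_idem G h' \<and> h \<noteq> (\<lambda>_. 0) \<and> h' \<noteq> (\<lambda>_. 0) \<and>
          gmul G h h' = (\<lambda>_. 0) \<and> a = gadd h h')"
      unfolding prim_central_idem_def by blast
    moreover have "h \<noteq> (\<lambda>_. 0)" using hnz unfolding h_def .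
    ultimately have "h' = (\<lambda>_. 0)" using hC h'C orth sum by blast
    then show ?thesis unfolding h'_def .
  qed
  have "e = h"
  proof
    fix u show "e u = h u" using fun_cong[OF split[OF e eh], of u] by simp
  qed
  moreover have "f = h"
  proof
    fix u show "f u = h u" using fun_cong[OF split[OF f fh], of u] by simp
  qed
  ultimately show False using ne by simp
qed



lemma prim_props:
  assumes "prim_central_idem G e"
  shows "e \<in> gcarrier G" "gmul G e e = e" "\<And>x. x \<in> gcarrier G \<Longrightarrow> gmul G e x = gmul G x e"
    "e \<noteq> (\<lambda>_. 0)"
  using assms unfolding prim_central_idem_def central_idem_def by blast+

definition Ecomb :: "nat \<Rightarrow> (nat \<Rightarrow> 'g \<Rightarrow> 'k::field) \<Rightarrow> (nat \<Rightarrow> 'k) \<Rightarrow> 'g \<Rightarrow> 'k" where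
  "Ecomb p e a = (\<lambda>u. \<Sum>i<p. a i * e i u)"

lemma Ecomb_gcarrier:
  assumes "\<forall>i<p. e i \<in> gcarrier G"
  shows "Ecomb p e a \<in> gcarrier G"
  using assms by (auto simp: Ecomb_def gcarrier_def)

lemma (in group) Ecomb_mul_e:
  assumes prim: "\<forall>i<p. prim_central_idem G (e i)" and inj: "inj_on e {..<p}" and k: "k < p"
  shows "gmul G (Ecomb p e a) (e k) = (\<lambda>u. a k * e k u)"
proof -
  have "gmul G (Ecomb p e a) (e k) = (\<lambda>u. \<Sum>i<p. a i * gmul G (e i) (e k) u)"
    unfolding Ecomb_def by (rule gmul_sum_left) simp
  also have "\<dots> = (\<lambda>u. a k * gmul G (e k) (e k) u)"
  proof (rule ext)
    fix u
    have z: "a i * gmul G (e i) (e k) u = 0" if i: "i \<in> {..<p}" "i \<noteq> k" for i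
    proof -
      have ne: "e i \<noteq> e k" by (rule inj_on_contraD[OF inj i(2)]) (use i k in auto)
      have pi: "prim_central_idem G (e i)" using prim i by blast
      have pk: "prim_central_idem G (e k)" using prim k by blast
      have "gmul G (e i) (e k) = (\<lambda>_. 0)" by (rule prim_orth[OF pi pk ne])
      then show ?thesis by simp
    qed
    show "(\<Sum>i<p. a i * gmul G (e i) (e k) u) = a k * gmul G (e k) (e k) u"
      using sum_single_nz[of "{..<p}" k "\<lambda>i. a i * gmul G (e i) (e k) u"] z k by simp
  qed
  also have "\<dots> = (\<lambda>u. a k * e k u)"
  proof -
    have "prim_central_idem G (e k)" using prim k by blast
    then have "gmul G (e k) (e k) = e k" by (rule prim_props)
    then show ?thesis by simp
  qed
  finally show ?thesis .
qed

lemma (in group) Ecomb_central: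
  assumes prim: "\<forall>i<p. prim_central_idem G (e i)" and x: "x \<in> gcarrier G"
  shows "gmul G (Ecomb p e a) x = gmul G x (Ecomb p e a)"
proof -
  have "gmul G (Ecomb p e a) x = (\<lambda>u. \<Sum>i<p. a i * gmul G (e i) x u)"
    unfolding Ecomb_def by (rule gmul_sum_left) simp
  also have "\<dots> = (\<lambda>u. \<Sum>i<p. a i * gmul G x (e i) u)"
  proof (rule ext, rule sum.cong[OF refl])
    fix u i assume i: "i \<in> {..<p}"
    then have "prim_central_idem G (e i)" using prim by blast
    then have "gmul G (e i) x = gmul G x (e i)" using x by (rule prim_props)
    then show "a i * gmul G (e i) x u = a i * gmul G x (e i) u" by simp
  qed
  also have "\<dots> = gmul G x (Ecomb p e a)"
    unfolding Ecomb_def by (rule gmul_sum_right[symmetric]) simp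
  finally show ?thesis .
qed

lemma (in group) Ecomb_idem:
  assumes prim: "\<forall>i<p. prim_central_idem G (e i)" and inj: "inj_on e {..<p}"
    and a01: "\<forall>i<p. a i \<in> {0, 1}"
  shows "gmul G (Ecomb p e a) (Ecomb p e a) = Ecomb p e a"
proof -
  have "gmul G (Ecomb p e a) (Ecomb p e a) = (\<lambda>u. \<Sum>i<p. a i * gmul G (Ecomb p e a) (e i) u)"
    by (subst (2) Ecomb_def) (rule gmul_sum_right, simp)
  also have "\<dots> = (\<lambda>u. \<Sum>i<p. a i * (a i * e i u))"
  proof (rule ext, rule sum.cong[OF refl])
    fix u i assume i: "i \<in> {..<p}"
    show "a i * gmul G (Ecomb p e a) (e i) u = a i * (a i * e i u)"
      using Ecomb_mul_e[OF prim inj, of i a] i by simp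
  qed
  also have "\<dots> = Ecomb p e a"
  proof (unfold Ecomb_def, rule ext, rule sum.cong[OF refl])
    fix u i assume i: "i \<in> {..<p}"
    then have "a i = 0 \<or> a i = 1" using a01 by auto
    then show "a i * (a i * e i u) = a i * e i u" by auto
  qed
  finally show ?thesis .
qed

lemma (in group) hmul_hz_hG:
  assumes fin: "finite (carrier G)" and l: "l < n" and x: "x \<in> gcarrier G"
  shows "hmul G chi n (hz G n l) (hG G x) c u = (if c = l \<and> u \<in> carrier G then x u else 0)"
proof (cases "c < n \<and> u \<in> carrier G")
  case True
  have inner: "(\<Sum>s\<in>carrier G. hz G n l k s * hG G x (c - k) (inv s \<otimes> u) * inverse (chi s) ^ (c - k))
      = (if k = l then hG G x (c - l) u * inverse (chi \<one>) ^ (c - l) else 0)" for k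
  proof (cases "k = l")
    case True
    have "(\<Sum>s\<in>carrier G. hz G n l k s * hG G x (c - k) (inv s \<otimes> u) * inverse (chi s) ^ (c - k))
        = hz G n l k \<one> * hG G x (c - k) (inv \<one> \<otimes> u) * inverse (chi \<one>) ^ (c - k)"
      by (rule sum_single_nz) (auto simp: hz_def fin)
    also have "\<dots> = hG G x (c - l) u * inverse (chi \<one>) ^ (c - l)"
      using True l \<open>c < n \<and> u \<in> carrier G\<close> by (simp add: hz_def)
    finally show ?thesis using True by simp
  next
    case False
    then show ?thesis by (auto simp: hz_def intro!: sum.neutral)
  qed
  have "hmul G chi n (hz G n l) (hG G x) c u =
      (\<Sum>k\<in>{..c}. if k = l then hG G x (c - l) u * inverse (chi \<one>) ^ (c - l) else 0)"
    using True by (simp add: hmul_def inner)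
  also have "\<dots> = (if l \<le> c then hG G x (c - l) u * inverse (chi \<one>) ^ (c - l) else 0)"
    by (simp add: sum.delta')
  also have "\<dots> = (if c = l \<and> u \<in> carrier G then x u else 0)"
    using True by (auto simp: hG_def)
  finally show ?thesis .
next
  case False
  then show ?thesis using l by (auto simp: hmul_def)
qed

lemma dec_lt:
  fixes l :: "nat \<Rightarrow> nat"
  assumes "\<forall>j\<in>{1..<t}. l j > l (Suc j)"
  shows "1 \<le> i \<Longrightarrow> i < j \<Longrightarrow> j \<le> t \<Longrightarrow> l j < l i"
proof (induction j)
  case 0 then show ?case by simp
next
  case (Suc j)
  have step: "l (Suc j) < l j" using assms Suc.prems by auto
  show ?case
  proof (cases "i = j")
    case True then show ?thesis using step by simp
  next
    case False
    then have "l j < l i" using Suc by auto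
    then show ?thesis using step by simp
  qed
qed

lemma (in group) zsum_props:
  assumes fin: "finite (carrier G)" and prim: "\<forall>i<p. prim_central_idem G (e i)"
    and t: "1 \<le> t" and l1: "l 1 \<le> n - 1" and n: "n \<ge> 2" and dec: "\<forall>j\<in>{1..<t}. l j > l (Suc j)"
  shows "zsum G chi n p e t l \<alpha> \<in> hcarrier G n"
    and "\<forall>c<l t. zsum G chi n p e t l \<alpha> c = (\<lambda>_. 0)"
    and "zsum G chi n p e t l \<alpha> (l t) = Ecomb p e (\<alpha> t)"
    and "l t < n"
proof -
  have ec: "\<forall>i<p. e i \<in> gcarrier G" using prim prim_props(1) by blast
  have lj: "l j < n" "l t \<le> l j" "j \<noteq> t \<Longrightarrow> l t < l j" if "j \<in> {1..t}" for j
  proof -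
    have "l j \<le> l 1" using dec_lt[OF dec, of 1 j] that by (cases "j = 1") auto
    then show "l j < n" using l1 n by simp
    show "j \<noteq> t \<Longrightarrow> l t < l j" using dec_lt[OF dec, of j t] that by auto
    then show "l t \<le> l j" by (cases "j = t") auto
  qed
  have Z: "zsum G chi n p e t l \<alpha> c u = (\<Sum>j\<in>{1..t}. if c = l j \<and> u \<in> carrier G then Ecomb p e (\<alpha> j) u else 0)" for c u
    unfolding zsum_def
  proof (rule sum.cong[OF refl])
    fix j assume j: "j \<in> {1..t}"
    show "hmul G chi n (hz G n (l j)) (hG G (\<lambda>u. \<Sum>i<p. \<alpha> j i * e i u)) c u =
        (if c = l j \<and> u \<in> carrier G then Ecomb p e (\<alpha> j) u else 0)"
      using hmul_hz_hG[OF fin lj(1)[OF j] Ecomb_gcarrier[OF ec, of "\<alpha> j"], of chi c u]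
      by (simp add: Ecomb_def)
  qed
  show "zsum G chi n p e t l \<alpha> \<in> hcarrier G n"
    unfolding hcarrier_def
  proof (intro CollectI allI impI)
    fix k s assume ks: "n \<le> k \<or> s \<notin> carrier G"
    show "zsum G chi n p e t l \<alpha> k s = 0" unfolding Z
      by (rule sum.neutral) (use ks lj in fastforce)
  qed
  show "\<forall>c<l t. zsum G chi n p e t l \<alpha> c = (\<lambda>_. 0)"
  proof (intro allI impI ext)
    fix c u assume c: "c < l t"
    show "zsum G chi n p e t l \<alpha> c u = 0" unfolding Z
      by (rule sum.neutral) (use c lj in fastforce)
  qed
  show "zsum G chi n p e t l \<alpha> (l t) = Ecomb p e (\<alpha> t)"
  proof (rule ext)
    fix u
    have "zsum G chi n p e t l \<alpha> (l t) u = (if l t = l t \<and> u \<in> carrier G then Ecomb p e (\<alpha> t) u else 0)"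
      unfolding Z by (rule sum_single_nz) (use t lj in fastforce)+
    also have "\<dots> = Ecomb p e (\<alpha> t) u"
      using Ecomb_gcarrier[OF ec, of "\<alpha> t"] by (auto simp: gcarrier_def)
    finally show "zsum G chi n p e t l \<alpha> (l t) u = Ecomb p e (\<alpha> t) u" .
  qed
  show "l t < n" using lj(1)[of t] t by simp
qed



definition Sset :: "('g, 'b) monoid_scheme \<Rightarrow> nat \<Rightarrow> nat \<Rightarrow> ('g \<Rightarrow> 'k::field) \<Rightarrow> (nat \<Rightarrow> 'g \<Rightarrow> 'k) set" where
  "Sset G n d E = {x \<in> hcarrier G n. (\<forall>k<d. x k = (\<lambda>_. 0)) \<and> gmul G (x d) E = x d}"

lemma hmul_hcarrier: "hmul G chi n x y \<in> hcarrier G n"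
  unfolding hmul_def hcarrier_def by auto

lemma hmul_low_left:
  assumes "\<forall>k<d. y k = (\<lambda>_. 0)" "c < d"
  shows "hmul G chi n x y c = (\<lambda>_. 0)"
proof (rule ext)
  fix u
  have "\<forall>k\<le>c. y (c - k) = (\<lambda>_. 0)" using assms by auto
  then show "hmul G chi n x y c u = 0" unfolding hmul_def by simp
qed

lemma hmul_low_right:
  assumes "\<forall>k<d. y k = (\<lambda>_. 0)" "c < d"
  shows "hmul G chi n y x c = (\<lambda>_. 0)"
proof (rule ext)
  fix u
  have "\<forall>k\<le>c. y k = (\<lambda>_. 0)" using assms by auto
  then show "hmul G chi n y x c u = 0" unfolding hmul_def by simp
qed

lemma hmul_d_left:
  assumes y: "\<forall>k<d. y k = (\<lambda>_. 0)" and d: "d < n"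
  shows "hmul G chi n x y d = gmul G (\<lambda>s. x 0 s * inverse (chi s) ^ d) (y d)"
proof (rule ext)
  fix u
  show "hmul G chi n x y d u = gmul G (\<lambda>s. x 0 s * inverse (chi s) ^ d) (y d) u"
  proof (cases "u \<in> carrier G")
    case True
    have "hmul G chi n x y d u = (\<Sum>k\<in>{..d}. \<Sum>s\<in>carrier G.
          x k s * y (d - k) (inv\<^bsub>G\<^esub> s \<otimes>\<^bsub>G\<^esub> u) * inverse (chi s) ^ (d - k))"
      using True d by (simp add: hmul_def)
    also have "\<dots> = (\<Sum>s\<in>carrier G. x 0 s * y (d - 0) (inv\<^bsub>G\<^esub> s \<otimes>\<^bsub>G\<^esub> u) * inverse (chi s) ^ (d - 0))"
    proof (rule sum_single_nz)
      fix k assume "k \<in> {..d}" "k \<noteq> 0"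
      then have "y (d - k) = (\<lambda>_. 0)" using y by auto
      then show "(\<Sum>s\<in>carrier G. x k s * y (d - k) (inv\<^bsub>G\<^esub> s \<otimes>\<^bsub>G\<^esub> u) * inverse (chi s) ^ (d - k)) = 0"
        by simp
    qed auto
    also have "\<dots> = gmul G (\<lambda>s. x 0 s * inverse (chi s) ^ d) (y d) u"
      using True by (simp add: gmul_def mult_ac)
    finally show ?thesis .
  next
    case False then show ?thesis by (simp add: hmul_def gmul_def)
  qed
qed

lemma hmul_d_right:
  assumes y: "\<forall>k<d. y k = (\<lambda>_. 0)" and d: "d < n"
  shows "hmul G chi n y x d = gmul G (y d) (x 0)"
proof (rule ext)
  fix u
  show "hmul G chi n y x d u = gmul G (y d) (x 0) u"
  proof (cases "u \<in> carrier G")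
    case True
    have "hmul G chi n y x d u = (\<Sum>k\<in>{..d}. \<Sum>s\<in>carrier G.
          y k s * x (d - k) (inv\<^bsub>G\<^esub> s \<otimes>\<^bsub>G\<^esub> u) * inverse (chi s) ^ (d - k))"
      using True d by (simp add: hmul_def)
    also have "\<dots> = (\<Sum>s\<in>carrier G. y d s * x (d - d) (inv\<^bsub>G\<^esub> s \<otimes>\<^bsub>G\<^esub> u) * inverse (chi s) ^ (d - d))"
    proof (rule sum_single_nz)
      fix k assume "k \<in> {..d}" "k \<noteq> d"
      then have "y k = (\<lambda>_. 0)" using y by auto
      then show "(\<Sum>s\<in>carrier G. y k s * x (d - k) (inv\<^bsub>G\<^esub> s \<otimes>\<^bsub>G\<^esub> u) * inverse (chi s) ^ (d - k)) = 0"
        by simp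
    qed auto
    also have "\<dots> = gmul G (y d) (x 0) u"
      using True by (simp add: gmul_def)
    finally show ?thesis .
  next
    case False then show ?thesis by (simp add: hmul_def gmul_def)
  qed
qed

lemma (in group) S_ideal:
  fixes E :: "'a \<Rightarrow> 'k::field"
  assumes d: "d < n" and E: "E \<in> gcarrier G" and Ec: "\<forall>x\<in>gcarrier G. gmul G E x = gmul G x E"
  shows "is_hideal G chi n (Sset G n d E)"
  unfolding is_hideal_def
proof (intro conjI ballI)
  show "Sset G n d E \<subseteq> hcarrier G n" by (auto simp: Sset_def)
  show "(\<lambda>_ _. 0) \<in> Sset G n d E"
    by (simp add: Sset_def hcarrier_def gmul_zero_left)
next
  fix a b :: "nat \<Rightarrow> 'a \<Rightarrow> 'k" assume a: "a \<in> Sset G n d E" and b: "b \<in> Sset G n d E"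
  have "hadd a b d = (\<lambda>u. a d u + b d u)" by (simp add: hadd_def)
  then have "gmul G (hadd a b d) E = (\<lambda>u. gmul G (a d) E u + gmul G (b d) E u)"
    by (simp add: gmul_add_left)
  also have "\<dots> = hadd a b d" using a b by (simp add: Sset_def hadd_def)
  finally show "hadd a b \<in> Sset G n d E"
    using a b by (auto simp: Sset_def hcarrier_def hadd_def fun_eq_iff)
next
  fix a x :: "nat \<Rightarrow> 'a \<Rightarrow> 'k" assume a: "a \<in> Sset G n d E" and x: "x \<in> hcarrier G n"
  have alow: "\<forall>k<d. a k = (\<lambda>_. 0)" and ad: "gmul G (a d) E = a d" using a by (auto simp: Sset_def)
  have x0: "x 0 \<in> gcarrier G" using x by (auto simp: hcarrier_def gcarrier_def)
  show "hmul G chi n x a \<in> Sset G n d E"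
  proof -
    let ?x' = "\<lambda>s. x 0 s * inverse (chi s) ^ d"
    have "gmul G (hmul G chi n x a d) E = gmul G ?x' (gmul G (a d) E)"
      by (simp only: hmul_d_left[OF alow d] gmul_assoc)
    also have "\<dots> = hmul G chi n x a d" by (simp only: ad hmul_d_left[OF alow d])
    finally show ?thesis using hmul_low_left[OF alow] hmul_hcarrier by (auto simp: Sset_def)
  qed
  show "hmul G chi n a x \<in> Sset G n d E"
  proof -
    have "gmul G (hmul G chi n a x d) E = gmul G (a d) (gmul G (x 0) E)"
      by (simp only: hmul_d_right[OF alow d] gmul_assoc)
    also have "\<dots> = gmul G (a d) (gmul G E (x 0))" using Ec x0 by simp
    also have "\<dots> = gmul G (gmul G (a d) E) (x 0)" by (simp only: gmul_assoc)
    also have "\<dots> = hmul G chi n a x d" by (simp only: ad hmul_d_right[OF alow d])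
    finally show ?thesis using hmul_low_right[OF alow] hmul_hcarrier by (auto simp: Sset_def)
  qed
qed



lemma sum_nz_coeff:
  assumes "(\<Sum>i<p. c i) \<noteq> (0::'k::field)"
  shows "\<exists>i<p. c i \<noteq> 0"
proof (rule ccontr)
  assume "\<not> (\<exists>i<p. c i \<noteq> 0)"
  then have "\<forall>i\<in>{..<p}. c i = 0" by auto
  then have "sum c {..<p} = 0" by (rule sum.neutral)
  with assms show False by simp
qed

lemma (in group) Ecomb_coeff:
  assumes prim: "\<forall>i<p. prim_central_idem G (e i)" and inj: "inj_on e {..<p}" and i: "i < p"
  shows "gmul G (Ecomb p e a) (e i) = (\<lambda>u. a i * e i u)" "\<exists>u. e i u \<noteq> 0"
proof -
  show "gmul G (Ecomb p e a) (e i) = (\<lambda>u. a i * e i u)" by (rule Ecomb_mul_e[OF prim inj i])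
  have "prim_central_idem G (e i)" using prim i by blast
  then have "e i \<noteq> (\<lambda>_. 0)" by (rule prim_props)
  then show "\<exists>u. e i u \<noteq> 0" by (auto simp: fun_eq_iff)
qed

lemma (in group) Ecomb_nz:
  assumes prim: "\<forall>i<p. prim_central_idem G (e i)" and inj: "inj_on e {..<p}"
    and s: "(\<Sum>i<p. a i) \<noteq> 0"
  shows "Ecomb p e a \<noteq> (\<lambda>_. 0)"
proof
  assume z: "Ecomb p e a = (\<lambda>_. 0)"
  obtain i where i: "i < p" "a i \<noteq> 0" using sum_nz_coeff[OF s] by blast
  obtain u where u: "e i u \<noteq> 0" using Ecomb_coeff(2)[OF prim inj i(1)] by blast
  have "gmul G (Ecomb p e a) (e i) u = a i * e i u" using Ecomb_coeff(1)[OF prim inj i(1), of a] by simp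
  moreover have "gmul G (Ecomb p e a) (e i) u = 0" unfolding z gmul_zero_left by simp
  ultimately show False using i u by simp
qed

lemma (in group) Ecomb_eq_coeff:
  assumes prim: "\<forall>i<p. prim_central_idem G (e i)" and inj: "inj_on e {..<p}"
    and eq: "Ecomb p e a = Ecomb p e b" and i: "i < p"
  shows "a i = b i"
proof -
  obtain u where u: "e i u \<noteq> 0" using Ecomb_coeff(2)[OF prim inj i] by blast
  have "a i * e i u = gmul G (Ecomb p e a) (e i) u" using Ecomb_coeff(1)[OF prim inj i, of a] by simp
  also have "\<dots> = gmul G (Ecomb p e b) (e i) u" by (simp only: eq)
  also have "\<dots> = b i * e i u" using Ecomb_coeff(1)[OF prim inj i, of b] by simp
  finally show ?thesis using u by simp
qed

lemma hideal_gen_mem: "a \<in> hideal_gen G chi n a"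
  unfolding hideal_gen_def by blast

lemma hideal_gen_sub: "is_hideal G chi n I \<Longrightarrow> a \<in> I \<Longrightarrow> hideal_gen G chi n a \<subseteq> I"
  unfolding hideal_gen_def by blast

theorem corollary3p6:
  fixes G :: "('g, 'b) monoid_scheme" and chi :: "'g \<Rightarrow> 'k::field_char_0"
    and g :: 'g and n p t r :: nat
    and e :: "nat \<Rightarrow> 'g \<Rightarrow> 'k"
    and l m :: "nat \<Rightarrow> nat" and \<alpha> \<beta> :: "nat \<Rightarrow> nat \<Rightarrow> 'k"
  assumes "alg_closed TYPE('k)"
    and "group G" and "finite (carrier G)"
    and "linear_char G chi"
    and "g \<in> carrier G" and "\<forall>s\<in>carrier G. g \<otimes>\<^bsub>G\<^esub> s = s \<otimes>\<^bsub>G\<^esub> g"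
    and "n \<ge> 2" and "mult_order_is (chi g) n"
    and "bij_betw e {..<p} {x. prim_central_idem G x}"
    and "1 \<le> t" and "l 1 \<le> n - 1" and "\<forall>j\<in>{1..<t}. l j > l (Suc j)"
    and "1 \<le> r" and "m 1 \<le> n - 1" and "\<forall>j\<in>{1..<r}. m j > m (Suc j)"
    and "\<forall>j\<in>{1..t}. \<forall>i<p. \<alpha> j i \<in> {0, 1}"
    and "\<forall>s\<in>{1..r}. \<forall>i<p. \<beta> s i \<in> {0, 1}"
    and "(\<Sum>i<p. \<alpha> t i) \<noteq> 0" and "(\<Sum>i<p. \<beta> r i) \<noteq> 0"
    and "hideal_gen G chi n (zsum G chi n p e t l \<alpha>) = hideal_gen G chi n (zsum G chi n p e r m \<beta>)"
  shows "l t = m r \<and> (\<forall>i<p. \<alpha> t i = \<beta> r i)"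
proof -
  interpret G: group G by (rule assms(2))
  have prim: "\<forall>i<p. prim_central_idem G (e i)"
  proof (intro allI impI)
    fix i assume "i < p"
    then show "prim_central_idem G (e i)" using bij_betw_apply[OF assms(9), of i] by simp
  qed
  have inj: "inj_on e {..<p}" using assms(9) unfolding bij_betw_def by blast
  have ec: "\<forall>i<p. e i \<in> gcarrier G" using prim prim_props(1) by blast
  define A where "A = zsum G chi n p e t l \<alpha>"
  define B where "B = zsum G chi n p e r m \<beta>"
  define Ea where "Ea = Ecomb p e (\<alpha> t)"
  define Fb where "Fb = Ecomb p e (\<beta> r)"
  have ZA1: "A \<in> hcarrier G n" unfolding A_def Ea_def
    by (rule G.zsum_props(1)[OF assms(3) prim assms(10) assms(11) assms(7) assms(12)])
  have ZA2: "\<forall>c<l t. A c = (\<lambda>_. 0)" unfolding A_def Ea_def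
    by (rule G.zsum_props(2)[OF assms(3) prim assms(10) assms(11) assms(7) assms(12)])
  have ZA3: "A (l t) = Ea" unfolding A_def Ea_def
    by (rule G.zsum_props(3)[OF assms(3) prim assms(10) assms(11) assms(7) assms(12)])
  have ZA4: "l t < n" unfolding A_def Ea_def
    by (rule G.zsum_props(4)[OF assms(3) prim assms(10) assms(11) assms(7) assms(12)])
  note ZA = ZA1 ZA2 ZA3 ZA4
  have ZB1: "B \<in> hcarrier G n" unfolding B_def Fb_def
    by (rule G.zsum_props(1)[OF assms(3) prim assms(13) assms(14) assms(7) assms(15)])
  have ZB2: "\<forall>c<m r. B c = (\<lambda>_. 0)" unfolding B_def Fb_def
    by (rule G.zsum_props(2)[OF assms(3) prim assms(13) assms(14) assms(7) assms(15)])
  have ZB3: "B (m r) = Fb" unfolding B_def Fb_def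
    by (rule G.zsum_props(3)[OF assms(3) prim assms(13) assms(14) assms(7) assms(15)])
  have ZB4: "m r < n" unfolding B_def Fb_def
    by (rule G.zsum_props(4)[OF assms(3) prim assms(13) assms(14) assms(7) assms(15)])
  note ZB = ZB1 ZB2 ZB3 ZB4
  have Eac: "Ea \<in> gcarrier G" unfolding Ea_def by (rule Ecomb_gcarrier[OF ec])
  have Fbc: "Fb \<in> gcarrier G" unfolding Fb_def by (rule Ecomb_gcarrier[OF ec])
  have Ecent: "\<forall>x\<in>gcarrier G. gmul G Ea x = gmul G x Ea"
    unfolding Ea_def using G.Ecomb_central[OF prim] by blast
  have Fcent: "\<forall>x\<in>gcarrier G. gmul G Fb x = gmul G x Fb"
    unfolding Fb_def using G.Ecomb_central[OF prim] by blast
  have a01: "\<forall>i<p. \<alpha> t i \<in> {0, 1}" using assms(16) assms(10) by auto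
  have b01: "\<forall>i<p. \<beta> r i \<in> {0, 1}" using assms(17) assms(13) by auto
  have Eidem: "gmul G Ea Ea = Ea" unfolding Ea_def by (rule G.Ecomb_idem[OF prim inj a01])
  have Fidem: "gmul G Fb Fb = Fb" unfolding Fb_def by (rule G.Ecomb_idem[OF prim inj b01])
  have Enz: "Ea \<noteq> (\<lambda>_. 0)" unfolding Ea_def by (rule G.Ecomb_nz[OF prim inj assms(18)])
  have Fnz: "Fb \<noteq> (\<lambda>_. 0)" unfolding Fb_def by (rule G.Ecomb_nz[OF prim inj assms(19)])
  have SA: "is_hideal G chi n (Sset G n (l t) Ea)" by (rule G.S_ideal[OF ZA(4) Eac Ecent])
  have SB: "is_hideal G chi n (Sset G n (m r) Fb)" by (rule G.S_ideal[OF ZB(4) Fbc Fcent])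
  have AinA: "A \<in> Sset G n (l t) Ea" unfolding Sset_def using ZA(1,2,3) Eidem by simp
  have BinB: "B \<in> Sset G n (m r) Fb" unfolding Sset_def using ZB(1,2,3) Fidem by simp
  have eqI: "hideal_gen G chi n A = hideal_gen G chi n B" using assms(20) unfolding A_def B_def .
  have BinA: "B \<in> Sset G n (l t) Ea"
    using hideal_gen_sub[OF SA AinA] hideal_gen_mem[of B G chi n] eqI by blast
  have AinB: "A \<in> Sset G n (m r) Fb"
    using hideal_gen_sub[OF SB BinB] hideal_gen_mem[of A G chi n] eqI by blast
  have le1: "l t \<le> m r"
  proof (rule ccontr)
    assume "\<not> l t \<le> m r"
    then have "m r < l t" by simp
    then have "B (m r) = (\<lambda>_. 0)" using BinA unfolding Sset_def by blast
    then show False using ZB(3) Fnz by simp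
  qed
  have le2: "m r \<le> l t"
  proof (rule ccontr)
    assume "\<not> m r \<le> l t"
    then have "l t < m r" by simp
    then have "A (l t) = (\<lambda>_. 0)" using AinB unfolding Sset_def by blast
    then show False using ZA(3) Enz by simp
  qed
  have lm: "l t = m r" using le1 le2 by simp
  have "gmul G (B (l t)) Ea = B (l t)" using BinA unfolding Sset_def by blast
  then have FE: "gmul G Fb Ea = Fb" using ZB(3) lm by simp
  have "gmul G (A (m r)) Fb = A (m r)" using AinB unfolding Sset_def by blast
  then have EF: "gmul G Ea Fb = Ea" using ZA(3) lm by simp
  have "Ea = gmul G Ea Fb" using EF by (rule sym)
  also have "\<dots> = gmul G Fb Ea" using Ecent Fbc by blast
  also have "\<dots> = Fb" by (rule FE)
  finally have "Ea = Fb" .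
  then have "Ecomb p e (\<alpha> t) = Ecomb p e (\<beta> r)" unfolding Ea_def Fb_def .
  then have "\<forall>i<p. \<alpha> t i = \<beta> r i" using G.Ecomb_eq_coeff[OF prim inj] by blast
  then show ?thesis using lm by simp
qed

end
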